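(* Let $R$ be a ring, $M$ a left $R$-module and $N$ a submodule of $M$. (1) $N$ is a completely hollow submodule of $M$ if and only if $N$ is a local module. (2) $N$ is completely strongly hollow in $M$ if and only if $N$ is a local module and strongly hollow in $M$.
   Context: $N$ is a completely hollow submodule if for every family $(K_i)_{i\in I}$ of submodules of $N$ with $\sum_i K_i=N$ there is $i$ with $K_i=N$. $N$ is completely strongly hollow in $M$ if for every family $(K_i)_{i\in I}$ of submodules of $M$ with $N\subseteq\sum_iK_i$ there is $i$ with $N\subseteq K_i$. $N$ is strongly hollow in $M$ if for all submodules $K,L$ of $M$, $N\subseteq K+L$ implies $N\subseteq K$ or $N\subseteq L$. A module is hollow if whenever it equals $K+L$ for submodules $K,L$, then $K$ or $L$ is the whole module; a local module is a nonzero cyclic hollow module. *)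

theory Defs
  imports "HOL-Algebra.Module"
begin

text \<open>Left modules over an arbitrary (not necessarily commutative) ring with unit.
  The library locale module requires a commutative ring, so we use the same
  axioms over a general ring.\<close>

locale left_module = R?: ring + M?: abelian_group M for M (structure) +
  assumes smult_closed [simp, intro]:
      "\<lbrakk>a \<in> carrier R; x \<in> carrier M\<rbrakk> \<Longrightarrow> a \<odot>\<^bsub>M\<^esub> x \<in> carrier M"
    and smult_l_distr:
      "\<lbrakk>a \<in> carrier R; b \<in> carrier R; x \<in> carrier M\<rbrakk> \<Longrightarrow>
      (a \<oplus> b) \<odot>\<^bsub>M\<^esub> x = a \<odot>\<^bsub>M\<^esub> x \<oplus>\<^bsub>M\<^esub> b \<odot>\<^bsub>M\<^esub> x"
    and smult_r_distr:
      "\<lbrakk>a \<in> carrier R; x \<in> carrier M; y \<in> carrier M\<rbrakk> \<Longrightarrow>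
      a \<odot>\<^bsub>M\<^esub> (x \<oplus>\<^bsub>M\<^esub> y) = a \<odot>\<^bsub>M\<^esub> x \<oplus>\<^bsub>M\<^esub> a \<odot>\<^bsub>M\<^esub> y"
    and smult_assoc1:
      "\<lbrakk>a \<in> carrier R; b \<in> carrier R; x \<in> carrier M\<rbrakk> \<Longrightarrow>
      (a \<otimes> b) \<odot>\<^bsub>M\<^esub> x = a \<odot>\<^bsub>M\<^esub> (b \<odot>\<^bsub>M\<^esub> x)"
    and smult_one [simp]:
      "x \<in> carrier M \<Longrightarrow> \<one> \<odot>\<^bsub>M\<^esub> x = x"

definition msum :: "('a, 'c) ring_scheme \<Rightarrow> ('a, 'b, 'd) module_scheme \<Rightarrow> 'b set set \<Rightarrow> 'b set" where
  "msum R M S = \<Inter>{H. submodule H R M \<and> \<Union>S \<subseteq> H}"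

definition msum2 :: "('a, 'b, 'd) module_scheme \<Rightarrow> 'b set \<Rightarrow> 'b set \<Rightarrow> 'b set" where
  "msum2 M K L = {k \<oplus>\<^bsub>M\<^esub> l | k l. k \<in> K \<and> l \<in> L}"

definition completely_hollow :: "('a, 'c) ring_scheme \<Rightarrow> ('a, 'b, 'd) module_scheme \<Rightarrow> 'b set \<Rightarrow> bool" where
  "completely_hollow R M N \<longleftrightarrow>
     (\<forall>S. (\<forall>K\<in>S. submodule K R M \<and> K \<subseteq> N) \<and> msum R M S = N \<longrightarrow> (\<exists>K\<in>S. K = N))"

definition completely_strongly_hollow :: "('a, 'c) ring_scheme \<Rightarrow> ('a, 'b, 'd) module_scheme \<Rightarrow> 'b set \<Rightarrow> bool" where
  "completely_strongly_hollow R M N \<longleftrightarrow>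
     (\<forall>S. (\<forall>K\<in>S. submodule K R M) \<and> N \<subseteq> msum R M S \<longrightarrow> (\<exists>K\<in>S. N \<subseteq> K))"

definition strongly_hollow :: "('a, 'c) ring_scheme \<Rightarrow> ('a, 'b, 'd) module_scheme \<Rightarrow> 'b set \<Rightarrow> bool" where
  "strongly_hollow R M N \<longleftrightarrow>
     (\<forall>K L. submodule K R M \<and> submodule L R M \<and> N \<subseteq> msum2 M K L \<longrightarrow> N \<subseteq> K \<or> N \<subseteq> L)"

definition hollow :: "('a, 'c) ring_scheme \<Rightarrow> ('a, 'b, 'd) module_scheme \<Rightarrow> 'b set \<Rightarrow> bool" where
  "hollow R M N \<longleftrightarrow>
     (\<forall>K L. submodule K R M \<and> K \<subseteq> N \<and> submodule L R M \<and> L \<subseteq> N \<and> msum2 M K L = N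
        \<longrightarrow> K = N \<or> L = N)"

definition cyclic :: "('a, 'c) ring_scheme \<Rightarrow> ('a, 'b, 'd) module_scheme \<Rightarrow> 'b set \<Rightarrow> bool" where
  "cyclic R M N \<longleftrightarrow> (\<exists>x\<in>N. N = {r \<odot>\<^bsub>M\<^esub> x | r. r \<in> carrier R})"

definition local_module :: "('a, 'c) ring_scheme \<Rightarrow> ('a, 'b, 'd) module_scheme \<Rightarrow> 'b set \<Rightarrow> bool" where
  "local_module R M N \<longleftrightarrow> N \<noteq> {\<zero>\<^bsub>M\<^esub>} \<and> cyclic R M N \<and> hollow R M N"

end

theory Submission
  imports Defs
begin

context left_module
begin

lemma lm_submoduleI:
  assumes subset: "H \<subseteq> carrier M"
    and zero: "\<zero>\<^bsub>M\<^esub> \<in> H"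
    and a_inv: "!!a. a \<in> H \<Longrightarrow> \<ominus>\<^bsub>M\<^esub> a \<in> H"
    and add : "\<And> a b. \<lbrakk>a \<in> H ; b \<in> H\<rbrakk> \<Longrightarrow> a \<oplus>\<^bsub>M\<^esub> b \<in> H"
    and sc : "\<And> a x. \<lbrakk>a \<in> carrier R; x \<in> H\<rbrakk> \<Longrightarrow> a \<odot>\<^bsub>M\<^esub> x \<in> H"
  shows "submodule H R M"
  apply (intro submodule.intro subgroup.intro)
  using assms unfolding submodule_axioms_def
  by (simp_all add : a_inv_def)

lemma lm_submoduleE:
  assumes "submodule H R M"
  shows "H \<subseteq> carrier M"
    and "\<zero>\<^bsub>M\<^esub> \<in> H"
    and "\<And>a. a \<in> H \<Longrightarrow> \<ominus>\<^bsub>M\<^esub> a \<in> H"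
    and "\<And>a b. \<lbrakk>a \<in> carrier R; b \<in> H\<rbrakk> \<Longrightarrow> a \<odot>\<^bsub>M\<^esub> b \<in> H"
    and "\<And> a b. \<lbrakk>a \<in> H ; b \<in> H\<rbrakk> \<Longrightarrow> a \<oplus>\<^bsub>M\<^esub> b \<in> H"
  using group.subgroupE[of "add_monoid M" H, OF _ submodule.axioms(1)[OF assms]] a_comm_group
        submodule.smult_closed[OF assms] subgroup.one_closed[OF submodule.axioms(1)[OF assms]]
  unfolding comm_group_def a_inv_def
  by auto

lemma lm_smult_l_null [simp]:
 "x \<in> carrier M ==> \<zero> \<odot>\<^bsub>M\<^esub> x = \<zero>\<^bsub>M\<^esub>"
proof-
  assume M : "x \<in> carrier M"
  note facts = M smult_closed [OF R.zero_closed]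
  from facts have "\<zero> \<odot>\<^bsub>M\<^esub> x = (\<zero> \<oplus> \<zero>) \<odot>\<^bsub>M\<^esub> x "
    using smult_l_distr by auto
  also have "... = \<zero> \<odot>\<^bsub>M\<^esub> x \<oplus>\<^bsub>M\<^esub> \<zero> \<odot>\<^bsub>M\<^esub> x"
    using smult_l_distr[of \<zero> \<zero> x] facts by auto
  finally show "\<zero> \<odot>\<^bsub>M\<^esub> x = \<zero>\<^bsub>M\<^esub>" using facts
    by (metis M.add.r_cancel_one')
qed

lemma lm_smult_l_minus:
"\<lbrakk> a \<in> carrier R; x \<in> carrier M \<rbrakk> \<Longrightarrow> (\<ominus>a) \<odot>\<^bsub>M\<^esub> x = \<ominus>\<^bsub>M\<^esub> (a \<odot>\<^bsub>M\<^esub> x)"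
proof-
  assume RM: "a \<in> carrier R" "x \<in> carrier M"
  from RM have a_smult: "a \<odot>\<^bsub>M\<^esub> x \<in> carrier M" by simp
  from RM have ma_smult: "\<ominus>a \<odot>\<^bsub>M\<^esub> x \<in> carrier M" by simp
  note facts = RM a_smult ma_smult
  from facts have "(\<ominus>a) \<odot>\<^bsub>M\<^esub> x = (\<ominus>a \<odot>\<^bsub>M\<^esub> x \<oplus>\<^bsub>M\<^esub> a \<odot>\<^bsub>M\<^esub> x) \<oplus>\<^bsub>M\<^esub> \<ominus>\<^bsub>M\<^esub>(a \<odot>\<^bsub>M\<^esub> x)"
    by (simp add: M.add.inv_solve_right)
  also from RM have "... = (\<ominus>a \<oplus> a) \<odot>\<^bsub>M\<^esub> x \<oplus>\<^bsub>M\<^esub> \<ominus>\<^bsub>M\<^esub>(a \<odot>\<^bsub>M\<^esub> x)"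
    by (simp add: smult_l_distr)
  also from facts lm_smult_l_null have "... = \<ominus>\<^bsub>M\<^esub>(a \<odot>\<^bsub>M\<^esub> x)"
    by (simp add: R.l_neg)
  finally show ?thesis .
qed

lemma lm_smult_r_null [simp]:
  "a \<in> carrier R ==> a \<odot>\<^bsub>M\<^esub> \<zero>\<^bsub>M\<^esub> = \<zero>\<^bsub>M\<^esub>"
proof -
  assume a: "a \<in> carrier R"
  have "a \<odot>\<^bsub>M\<^esub> \<zero>\<^bsub>M\<^esub> = a \<odot>\<^bsub>M\<^esub> (\<zero> \<odot>\<^bsub>M\<^esub> \<zero>\<^bsub>M\<^esub>)" by simp
  also have "\<dots> = (a \<otimes> \<zero>) \<odot>\<^bsub>M\<^esub> \<zero>\<^bsub>M\<^esub>" using smult_assoc1[of a \<zero> "\<zero>\<^bsub>M\<^esub>"] a by simp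
  also have "\<dots> = \<zero>\<^bsub>M\<^esub>" using a by simp
  finally show ?thesis .
qed

lemma carrier_sub: "submodule (carrier M) R M"
  by (rule lm_submoduleI) auto

lemma cyc_sub:
  assumes x: "x \<in> carrier M"
  shows "submodule {r \<odot>\<^bsub>M\<^esub> x | r. r \<in> carrier R} R M"
proof (rule lm_submoduleI)
  show "{r \<odot>\<^bsub>M\<^esub> x | r. r \<in> carrier R} \<subseteq> carrier M" using x by auto
  have "\<zero>\<^bsub>M\<^esub> = \<zero> \<odot>\<^bsub>M\<^esub> x" using x by simp
  then show "\<zero>\<^bsub>M\<^esub> \<in> {r \<odot>\<^bsub>M\<^esub> x | r. r \<in> carrier R}"
    using R.zero_closed by blast
  fix a assume "a \<in> {r \<odot>\<^bsub>M\<^esub> x | r. r \<in> carrier R}"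
  then obtain r where r: "r \<in> carrier R" "a = r \<odot>\<^bsub>M\<^esub> x" by auto
  then have "\<ominus>\<^bsub>M\<^esub> a = (\<ominus> r) \<odot>\<^bsub>M\<^esub> x" using lm_smult_l_minus[OF r(1) x] by simp
  moreover have "\<ominus> r \<in> carrier R" using r by simp
  ultimately show "\<ominus>\<^bsub>M\<^esub> a \<in> {r \<odot>\<^bsub>M\<^esub> x | r. r \<in> carrier R}" by blast
next
  fix a b assume "a \<in> {r \<odot>\<^bsub>M\<^esub> x | r. r \<in> carrier R}" "b \<in> {r \<odot>\<^bsub>M\<^esub> x | r. r \<in> carrier R}"
  then obtain r s where rs: "r \<in> carrier R" "a = r \<odot>\<^bsub>M\<^esub> x" "s \<in> carrier R" "b = s \<odot>\<^bsub>M\<^esub> x" by auto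
  then have "a \<oplus>\<^bsub>M\<^esub> b = (r \<oplus> s) \<odot>\<^bsub>M\<^esub> x" using smult_l_distr[of r s x] x by simp
  moreover have "r \<oplus> s \<in> carrier R" using rs by simp
  ultimately show "a \<oplus>\<^bsub>M\<^esub> b \<in> {r \<odot>\<^bsub>M\<^esub> x | r. r \<in> carrier R}" by blast
next
  fix a y assume a: "a \<in> carrier R" and "y \<in> {r \<odot>\<^bsub>M\<^esub> x | r. r \<in> carrier R}"
  then obtain r where r: "r \<in> carrier R" "y = r \<odot>\<^bsub>M\<^esub> x" by auto
  then have "a \<odot>\<^bsub>M\<^esub> y = (a \<otimes> r) \<odot>\<^bsub>M\<^esub> x" using smult_assoc1[of a r x] x a by simp
  moreover have "a \<otimes> r \<in> carrier R" using r a by simp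
  ultimately show "a \<odot>\<^bsub>M\<^esub> y \<in> {r \<odot>\<^bsub>M\<^esub> x | r. r \<in> carrier R}" by blast
qed

lemma cyc_least:
  assumes "submodule H R M" "x \<in> H"
  shows "{r \<odot>\<^bsub>M\<^esub> x | r. r \<in> carrier R} \<subseteq> H"
  using lm_submoduleE(4)[OF assms(1)] assms(2) by auto

lemma cyc_mem:
  assumes "x \<in> carrier M"
  shows "x \<in> {r \<odot>\<^bsub>M\<^esub> x | r. r \<in> carrier R}"
proof -
  have "x = \<one> \<odot>\<^bsub>M\<^esub> x" using assms by simp
  then show ?thesis using R.one_closed by blast
qed

lemma sum2_sub:
  assumes K: "submodule K R M" and L: "submodule L R M"
  shows "submodule (msum2 M K L) R M"
proof (rule lm_submoduleI)
  note KE = lm_submoduleE[OF K] and LE = lm_submoduleE[OF L]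
  show "msum2 M K L \<subseteq> carrier M" unfolding msum2_def using KE(1) LE(1) by blast
  have "\<zero>\<^bsub>M\<^esub> = \<zero>\<^bsub>M\<^esub> \<oplus>\<^bsub>M\<^esub> \<zero>\<^bsub>M\<^esub>" by simp
  then show "\<zero>\<^bsub>M\<^esub> \<in> msum2 M K L" unfolding msum2_def using KE(2) LE(2) by blast
  fix a assume "a \<in> msum2 M K L"
  then obtain k l where kl: "k \<in> K" "l \<in> L" "a = k \<oplus>\<^bsub>M\<^esub> l" unfolding msum2_def by auto
  have "\<ominus>\<^bsub>M\<^esub> a = \<ominus>\<^bsub>M\<^esub> k \<oplus>\<^bsub>M\<^esub> \<ominus>\<^bsub>M\<^esub> l"
  proof -
    have "k \<in> carrier M" "l \<in> carrier M" using kl KE(1) LE(1) by auto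
    then show ?thesis using kl(3) by (simp add: M.minus_add)
  qed
  then show "\<ominus>\<^bsub>M\<^esub> a \<in> msum2 M K L" unfolding msum2_def using kl KE(3) LE(3) by blast
next
  note KE = lm_submoduleE[OF K] and LE = lm_submoduleE[OF L]
  fix a b assume "a \<in> msum2 M K L" "b \<in> msum2 M K L"
  then obtain k l k' l' where kl: "k \<in> K" "l \<in> L" "a = k \<oplus>\<^bsub>M\<^esub> l"
      "k' \<in> K" "l' \<in> L" "b = k' \<oplus>\<^bsub>M\<^esub> l'" unfolding msum2_def by auto
  have c: "k \<in> carrier M" "l \<in> carrier M" "k' \<in> carrier M" "l' \<in> carrier M"
    using kl KE(1) LE(1) by auto
  have "a \<oplus>\<^bsub>M\<^esub> b = (k \<oplus>\<^bsub>M\<^esub> k') \<oplus>\<^bsub>M\<^esub> (l \<oplus>\<^bsub>M\<^esub> l')"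
    using c kl by (simp add: M.a_ac)
  then show "a \<oplus>\<^bsub>M\<^esub> b \<in> msum2 M K L" unfolding msum2_def using kl KE(5) LE(5) by blast
next
  note KE = lm_submoduleE[OF K] and LE = lm_submoduleE[OF L]
  fix a y assume a: "a \<in> carrier R" and "y \<in> msum2 M K L"
  then obtain k l where kl: "k \<in> K" "l \<in> L" "y = k \<oplus>\<^bsub>M\<^esub> l" unfolding msum2_def by auto
  have "a \<odot>\<^bsub>M\<^esub> y = a \<odot>\<^bsub>M\<^esub> k \<oplus>\<^bsub>M\<^esub> a \<odot>\<^bsub>M\<^esub> l"
    using kl KE(1) LE(1) a smult_r_distr by blast
  then show "a \<odot>\<^bsub>M\<^esub> y \<in> msum2 M K L" unfolding msum2_def using kl KE(4) LE(4) a by blast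
qed

lemma sum2_incl:
  assumes K: "submodule K R M" and L: "submodule L R M"
  shows "K \<subseteq> msum2 M K L" "L \<subseteq> msum2 M K L"
proof -
  note KE = lm_submoduleE[OF K] and LE = lm_submoduleE[OF L]
  show "K \<subseteq> msum2 M K L"
  proof
    fix k assume k: "k \<in> K"
    then have "k = k \<oplus>\<^bsub>M\<^esub> \<zero>\<^bsub>M\<^esub>" using KE(1) by auto
    then show "k \<in> msum2 M K L" unfolding msum2_def using k LE(2) by blast
  qed
  show "L \<subseteq> msum2 M K L"
  proof
    fix k assume k: "k \<in> L"
    then have "k = \<zero>\<^bsub>M\<^esub> \<oplus>\<^bsub>M\<^esub> k" using LE(1) by auto
    then show "k \<in> msum2 M K L" unfolding msum2_def using k KE(2) by blast
  qed
qed

lemma sum2_least: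
  assumes "submodule H R M" "K \<subseteq> H" "L \<subseteq> H"
  shows "msum2 M K L \<subseteq> H"
  unfolding msum2_def using lm_submoduleE(5)[OF assms(1)] assms(2,3) by blast

lemma msum_sub:
  assumes "\<forall>K\<in>S. submodule K R M"
  shows "submodule (msum R M S) R M"
proof -
  let ?C = "{H. submodule H R M \<and> \<Union>S \<subseteq> H}"
  have eq: "msum R M S = \<Inter>?C" unfolding msum_def by simp
  have cm: "carrier M \<in> ?C"
  proof -
    have "\<Union>S \<subseteq> carrier M"
    proof
      fix y assume "y \<in> \<Union>S"
      then obtain K where "K \<in> S" "y \<in> K" by auto
      then show "y \<in> carrier M" using assms lm_submoduleE(1) by blast
    qed
    then show ?thesis using carrier_sub by simp
  qed
  show ?thesis unfolding eq
  proof (rule lm_submoduleI)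
    show "\<Inter>?C \<subseteq> carrier M" using cm by (rule Inter_lower)
    show "\<zero>\<^bsub>M\<^esub> \<in> \<Inter>?C"
    proof (rule InterI)
      fix H assume "H \<in> ?C" then show "\<zero>\<^bsub>M\<^esub> \<in> H" using lm_submoduleE(2) by simp
    qed
    show "\<ominus>\<^bsub>M\<^esub> a \<in> \<Inter>?C" if "a \<in> \<Inter>?C" for a
    proof (rule InterI)
      fix H assume H: "H \<in> ?C"
      then have "a \<in> H" using that by (rule InterD[rotated])
      then show "\<ominus>\<^bsub>M\<^esub> a \<in> H" using H lm_submoduleE(3) by simp
    qed
    show "a \<oplus>\<^bsub>M\<^esub> b \<in> \<Inter>?C" if "a \<in> \<Inter>?C" "b \<in> \<Inter>?C" for a b
    proof (rule InterI)
      fix H assume H: "H \<in> ?C"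
      then have "a \<in> H" "b \<in> H" using that by (auto intro: InterD[rotated])
      then show "a \<oplus>\<^bsub>M\<^esub> b \<in> H" using H lm_submoduleE(5) by simp
    qed
    show "a \<odot>\<^bsub>M\<^esub> b \<in> \<Inter>?C" if "a \<in> carrier R" "b \<in> \<Inter>?C" for a b
    proof (rule InterI)
      fix H assume H: "H \<in> ?C"
      then have "b \<in> H" using that by (auto intro: InterD[rotated])
      then show "a \<odot>\<^bsub>M\<^esub> b \<in> H" using H that(1) lm_submoduleE(4) by simp
    qed
  qed
qed

lemma msum_upper:
  assumes "\<forall>K\<in>S. submodule K R M"
  shows "\<Union>S \<subseteq> msum R M S"
  unfolding msum_def by blast

lemma msum_least:
  assumes "submodule H R M" "\<Union>S \<subseteq> H"
  shows "msum R M S \<subseteq> H"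
  unfolding msum_def using assms by blast

lemma msum_mono:
  assumes "\<forall>K\<in>T. submodule K R M" "S \<subseteq> T"
  shows "msum R M S \<subseteq> msum R M T"
  by (rule msum_least[OF msum_sub[OF assms(1)]]) (use msum_upper[OF assms(1)] assms(2) in blast)

lemma msum_empty: "msum R M {} = {\<zero>\<^bsub>M\<^esub>}"
proof -
  have "submodule {\<zero>\<^bsub>M\<^esub>} R M"
    by (rule lm_submoduleI) auto
  then have "msum R M {} \<subseteq> {\<zero>\<^bsub>M\<^esub>}" by (intro msum_least) auto
  moreover have "\<zero>\<^bsub>M\<^esub> \<in> msum R M {}" using lm_submoduleE(2)[OF msum_sub[of "{}"]] by simp
  ultimately show ?thesis by blast
qed

lemma msum_insert:
  assumes "\<forall>K\<in>insert K F. submodule K R M"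
  shows "msum R M (insert K F) = msum2 M K (msum R M F)"
proof
  have K: "submodule K R M" and F: "\<forall>K\<in>F. submodule K R M" using assms by auto
  note s2 = sum2_sub[OF K msum_sub[OF F]]
  show "msum R M (insert K F) \<subseteq> msum2 M K (msum R M F)"
    apply (rule msum_least[OF s2])
    using sum2_incl[OF K msum_sub[OF F]] msum_upper[OF F] by blast
  show "msum2 M K (msum R M F) \<subseteq> msum R M (insert K F)"
    apply (rule sum2_least[OF msum_sub[OF assms]])
    using msum_upper[OF assms] apply blast
    apply (rule msum_mono[OF assms]) by blast
qed

lemma msum_pair:
  assumes "submodule K R M" "submodule L R M"
  shows "msum R M {K, L} = msum2 M K L"
proof -
  have "msum R M {L} = L"
  proof
    show "msum R M {L} \<subseteq> L" by (rule msum_least[OF assms(2)]) auto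
    show "L \<subseteq> msum R M {L}" using msum_upper[of "{L}"] assms by auto
  qed
  then show ?thesis using msum_insert[of K "{L}"] assms by auto
qed

lemma msum_finite:
  assumes S: "\<forall>K\<in>S. submodule K R M" and x: "x \<in> msum R M S"
  shows "\<exists>F. finite F \<and> F \<subseteq> S \<and> x \<in> msum R M F"
proof -
  define U where "U = {y. \<exists>F. finite F \<and> F \<subseteq> S \<and> y \<in> msum R M F}"
  have UI: "y \<in> U" if "finite F" "F \<subseteq> S" "y \<in> msum R M F" for y F
    unfolding U_def using that by auto
  have UE: "\<exists>F. finite F \<and> F \<subseteq> S \<and> y \<in> msum R M F" if "y \<in> U" for y
    using that unfolding U_def by simp
  have FS: "\<forall>K\<in>F. submodule K R M" if "F \<subseteq> S" for F using that S by blast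
  have sub: "submodule U R M"
  proof (rule lm_submoduleI)
    show "U \<subseteq> carrier M"
    proof
      fix y assume "y \<in> U"
      then obtain F where F: "finite F" "F \<subseteq> S" "y \<in> msum R M F" using UE by blast
      then show "y \<in> carrier M" using lm_submoduleE(1)[OF msum_sub[OF FS[OF F(2)]]] by blast
    qed
    have "finite {} \<and> {} \<subseteq> S \<and> \<zero>\<^bsub>M\<^esub> \<in> msum R M {}" using msum_empty by simp
    then show "\<zero>\<^bsub>M\<^esub> \<in> U" using UI[of "{}"] by blast
    show "\<ominus>\<^bsub>M\<^esub> a \<in> U" if "a \<in> U" for a
    proof -
      obtain F where F: "finite F" "F \<subseteq> S" "a \<in> msum R M F" using UE[OF \<open>a \<in> U\<close>] by blast
      then have "\<ominus>\<^bsub>M\<^esub> a \<in> msum R M F" using lm_submoduleE(3)[OF msum_sub[OF FS[OF F(2)]]] by blast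
      then show ?thesis by (rule UI[OF F(1,2)])
    qed
    show "a \<odot>\<^bsub>M\<^esub> b \<in> U" if "a \<in> carrier R" "b \<in> U" for a b
    proof -
      obtain F where F: "finite F" "F \<subseteq> S" "b \<in> msum R M F" using UE[OF \<open>b \<in> U\<close>] by blast
      then have "a \<odot>\<^bsub>M\<^esub> b \<in> msum R M F" using lm_submoduleE(4)[OF msum_sub[OF FS[OF F(2)]]] that(1) by blast
      then show ?thesis by (rule UI[OF F(1,2)])
    qed
    show "a \<oplus>\<^bsub>M\<^esub> b \<in> U" if "a \<in> U" "b \<in> U" for a b
    proof -
      obtain F where F: "finite F" "F \<subseteq> S" "a \<in> msum R M F" using UE[OF \<open>a \<in> U\<close>] by blast
      obtain G where G: "finite G" "G \<subseteq> S" "b \<in> msum R M G" using UE[OF \<open>b \<in> U\<close>] by blast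
      have FG: "\<forall>K\<in>F \<union> G. submodule K R M" using F G S by blast
      have "msum R M F \<subseteq> msum R M (F \<union> G)" by (rule msum_mono[OF FG]) simp
      then have 1: "a \<in> msum R M (F \<union> G)" using F(3) by blast
      have "msum R M G \<subseteq> msum R M (F \<union> G)" by (rule msum_mono[OF FG]) simp
      then have 2: "b \<in> msum R M (F \<union> G)" using G(3) by blast
      have "a \<oplus>\<^bsub>M\<^esub> b \<in> msum R M (F \<union> G)" using lm_submoduleE(5)[OF msum_sub[OF FG] 1 2] .
      moreover have "finite (F \<union> G)" "F \<union> G \<subseteq> S" using F G by auto
      ultimately show ?thesis using UI[of "F \<union> G"] by blast
    qed
  qed
  have "\<Union>S \<subseteq> U"
  proof
    fix y assume "y \<in> \<Union>S"
    then obtain K where K: "K \<in> S" "y \<in> K" by blast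
    have "\<Union>{K} \<subseteq> msum R M {K}" by (rule msum_upper) (use K S in blast)
    then have "y \<in> msum R M {K}" using K by blast
    moreover have "finite {K}" "{K} \<subseteq> S" using K by auto
    ultimately show "y \<in> U" using UI[of "{K}"] by blast
  qed
  then have "msum R M S \<subseteq> U" by (rule msum_least[OF sub])
  then show ?thesis using x UE by auto
qed

lemma hollow_fin:
  assumes N: "submodule N R M" and h: "hollow R M N" and nz: "N \<noteq> {\<zero>\<^bsub>M\<^esub>}"
  shows "finite F \<Longrightarrow> (\<forall>K\<in>F. submodule K R M \<and> K \<subseteq> N \<and> K \<noteq> N) \<Longrightarrow> msum R M F \<noteq> N"
proof (induction F rule: finite_induct)
  case empty
  then show ?case using msum_empty nz by simp
next
  case (insert K F)
  have K: "submodule K R M" "K \<subseteq> N" "K \<noteq> N" using insert.prems by auto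
  have F: "\<forall>K\<in>F. submodule K R M" using insert.prems by auto
  have ne: "msum R M F \<noteq> N" using insert.IH insert.prems by auto
  have sub: "msum R M F \<subseteq> N" by (rule msum_least[OF N]) (use insert.prems in blast)
  have eq: "msum R M (insert K F) = msum2 M K (msum R M F)"
    by (rule msum_insert) (use insert.prems in blast)
  show ?case
  proof
    assume "msum R M (insert K F) = N"
    then have "msum2 M K (msum R M F) = N" using eq by simp
    then have "K = N \<or> msum R M F = N"
      using h K sub msum_sub[OF F] unfolding hollow_def by auto
    then show False using K(3) ne by blast
  qed
qed

lemma sh_fin:
  assumes N: "submodule N R M" and h: "strongly_hollow R M N" and nz: "N \<noteq> {\<zero>\<^bsub>M\<^esub>}"
  shows "finite F \<Longrightarrow> (\<forall>K\<in>F. submodule K R M) \<Longrightarrow> N \<subseteq> msum R M F \<Longrightarrow> \<exists>K\<in>F. N \<subseteq> K"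
proof (induction F rule: finite_induct)
  case empty
  then have "N \<subseteq> {\<zero>\<^bsub>M\<^esub>}" using msum_empty by simp
  moreover have "\<zero>\<^bsub>M\<^esub> \<in> N" using lm_submoduleE(2)[OF N] .
  ultimately show ?case using nz by blast
next
  case (insert K F)
  have K: "submodule K R M" and F: "\<forall>K\<in>F. submodule K R M" using insert.prems by auto
  have eq: "msum R M (insert K F) = msum2 M K (msum R M F)"
    by (rule msum_insert) (use insert.prems in blast)
  have "N \<subseteq> msum2 M K (msum R M F)" using insert.prems eq by simp
  then have "N \<subseteq> K \<or> N \<subseteq> msum R M F"
    using h K msum_sub[OF F] unfolding strongly_hollow_def by blast
  then show ?case
  proof
    assume "N \<subseteq> K" then show ?thesis by blast
  next
    assume "N \<subseteq> msum R M F"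
    then show ?thesis using insert.IH F by blast
  qed
qed

lemma ch_imp_local:
  assumes N: "submodule N R M" and ch: "completely_hollow R M N"
  shows "local_module R M N"
proof -
  have Nc: "N \<subseteq> carrier M" using lm_submoduleE(1)[OF N] .
  have ch': "\<exists>K\<in>S. K = N" if "\<forall>K\<in>S. submodule K R M \<and> K \<subseteq> N" "msum R M S = N" for S
    using ch that unfolding completely_hollow_def by auto
  have nz: "N \<noteq> {\<zero>\<^bsub>M\<^esub>}"
  proof
    assume "N = {\<zero>\<^bsub>M\<^esub>}"
    then have "msum R M {} = N" using msum_empty by simp
    then show False using ch'[of "{}"] by simp
  qed
  have cyc: "cyclic R M N"
  proof -
    define S where "S = (\<lambda>x. {r \<odot>\<^bsub>M\<^esub> x | r. r \<in> carrier R}) ` N"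
    have Ssub: "\<forall>K\<in>S. submodule K R M \<and> K \<subseteq> N"
      unfolding S_def using cyc_sub cyc_least[OF N] Nc by blast
    have "msum R M S \<subseteq> N" by (rule msum_least[OF N]) (use Ssub in blast)
    moreover have "N \<subseteq> \<Union>S"
    proof
      fix x assume "x \<in> N"
      then show "x \<in> \<Union>S" unfolding S_def using cyc_mem Nc by blast
    qed
    then have "N \<subseteq> msum R M S" using msum_upper Ssub by blast
    ultimately have "msum R M S = N" by blast
    then obtain K where "K \<in> S" "K = N" using ch'[OF Ssub] by blast
    then show ?thesis unfolding cyclic_def S_def by blast
  qed
  have hol: "hollow R M N"
    unfolding hollow_def
  proof (intro allI impI)
    fix K L assume a: "submodule K R M \<and> K \<subseteq> N \<and> submodule L R M \<and> L \<subseteq> N \<and> msum2 M K L = N"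
    then have "msum R M {K, L} = N" using msum_pair by simp
    moreover have "\<forall>H\<in>{K,L}. submodule H R M \<and> H \<subseteq> N" using a by blast
    ultimately have "\<exists>H\<in>{K,L}. H = N" using ch'[of "{K,L}"] by blast
    then show "K = N \<or> L = N" by blast
  qed
  show ?thesis unfolding local_module_def using nz cyc hol by blast
qed

lemma local_imp_ch:
  assumes N: "submodule N R M" and loc: "local_module R M N"
  shows "completely_hollow R M N"
  unfolding completely_hollow_def
proof (intro allI impI)
  fix S assume a: "(\<forall>K\<in>S. submodule K R M \<and> K \<subseteq> N) \<and> msum R M S = N"
  have nz: "N \<noteq> {\<zero>\<^bsub>M\<^esub>}" and h: "hollow R M N" using loc unfolding local_module_def by auto
  have "cyclic R M N" using loc unfolding local_module_def by simp
  then obtain x where x: "x \<in> N" "N = {r \<odot>\<^bsub>M\<^esub> x | r. r \<in> carrier R}"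
    unfolding cyclic_def by (elim bexE) simp
  have S: "\<forall>K\<in>S. submodule K R M" using a by blast
  have xS: "x \<in> msum R M S" using a x(1) by simp
  obtain F where F: "finite F" "F \<subseteq> S" "x \<in> msum R M F"
    using msum_finite[OF S xS] by blast
  have FS: "\<forall>K\<in>F. submodule K R M" using F(2) S by blast
  have "\<Union>F \<subseteq> N" using a F(2) by blast
  then have "msum R M F \<subseteq> N" by (rule msum_least[OF N])
  moreover have "N \<subseteq> msum R M F" using cyc_least[OF msum_sub[OF FS] F(3)] by (subst x(2))
  ultimately have eq: "msum R M F = N" by blast
  show "\<exists>K\<in>S. K = N"
  proof (rule ccontr)
    assume "\<not> (\<exists>K\<in>S. K = N)"
    then have "\<forall>K\<in>F. submodule K R M \<and> K \<subseteq> N \<and> K \<noteq> N" using a F(2) by auto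
    then have "msum R M F \<noteq> N" by (rule hollow_fin[OF N h nz F(1)])
    then show False using eq by simp
  qed
qed

lemma csh_iff:
  assumes N: "submodule N R M"
  shows "completely_strongly_hollow R M N \<longleftrightarrow> local_module R M N \<and> strongly_hollow R M N"
proof
  assume c: "completely_strongly_hollow R M N"
  have c': "\<exists>K\<in>S. N \<subseteq> K" if "\<forall>K\<in>S. submodule K R M" "N \<subseteq> msum R M S" for S
    using c that unfolding completely_strongly_hollow_def by auto
  have sh: "strongly_hollow R M N"
    unfolding strongly_hollow_def
  proof (intro allI impI)
    fix K L assume a: "submodule K R M \<and> submodule L R M \<and> N \<subseteq> msum2 M K L"
    then have "N \<subseteq> msum R M {K, L}" using msum_pair by simp
    moreover have "\<forall>H\<in>{K,L}. submodule H R M" using a by blast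
    ultimately have "\<exists>H\<in>{K,L}. N \<subseteq> H" using c'[of "{K,L}"] by blast
    then show "N \<subseteq> K \<or> N \<subseteq> L" by blast
  qed
  have "completely_hollow R M N"
    unfolding completely_hollow_def
  proof (intro allI impI)
    fix S assume a: "(\<forall>K\<in>S. submodule K R M \<and> K \<subseteq> N) \<and> msum R M S = N"
    then have "\<exists>K\<in>S. N \<subseteq> K" using c'[of S] by blast
    then show "\<exists>K\<in>S. K = N" using a by blast
  qed
  then show "local_module R M N \<and> strongly_hollow R M N" using ch_imp_local[OF N] sh by blast
next
  assume a: "local_module R M N \<and> strongly_hollow R M N"
  have nz: "N \<noteq> {\<zero>\<^bsub>M\<^esub>}" using a unfolding local_module_def by auto
  have "cyclic R M N" using a unfolding local_module_def by simp
  then obtain x where x: "x \<in> N" "N = {r \<odot>\<^bsub>M\<^esub> x | r. r \<in> carrier R}"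
    unfolding cyclic_def by (elim bexE) simp
  show "completely_strongly_hollow R M N"
    unfolding completely_strongly_hollow_def
  proof (intro allI impI)
    fix S assume b: "(\<forall>K\<in>S. submodule K R M) \<and> N \<subseteq> msum R M S"
    have S: "\<forall>K\<in>S. submodule K R M" using b by blast
    have xS: "x \<in> msum R M S" using b x(1) by blast
    obtain F where F: "finite F" "F \<subseteq> S" "x \<in> msum R M F"
      using msum_finite[OF S xS] by blast
    have FS: "\<forall>K\<in>F. submodule K R M" using F(2) S by blast
    have "N \<subseteq> msum R M F" using cyc_least[OF msum_sub[OF FS] F(3)] by (subst x(2))
    moreover have "strongly_hollow R M N" using a by simp
    ultimately have "\<exists>K\<in>F. N \<subseteq> K" using sh_fin[OF N _ nz F(1) FS] by blast
    then show "\<exists>K\<in>S. N \<subseteq> K" using F(2) by blast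
  qed
qed

end

theorem lemma2p3:
  fixes R :: "('a, 'c) ring_scheme" and M :: "('a, 'b, 'd) module_scheme" and N :: "'b set"
  assumes "left_module R M" and "submodule N R M"
  shows "(completely_hollow R M N \<longleftrightarrow> local_module R M N)
     \<and> (completely_strongly_hollow R M N \<longleftrightarrow> local_module R M N \<and> strongly_hollow R M N)"
proof -
  interpret left_module R M by (rule assms(1))
  show ?thesis using ch_imp_local[OF assms(2)] local_imp_ch[OF assms(2)] csh_iff[OF assms(2)] by blast
qed

end
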